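(* Let $n\ge0$ be an integer and $t,x_0,x_1,\dots,x_n$ commuting indeterminates. For nonnegative integers $m_1,\dots,m_n$ put $M_j=m_j+m_{j+1}+\cdots+m_n$ ($M_{n+1}=0$). Then $$\sum_{m_1,\dots,m_n\ge0}\frac{(1+tx_0)^{n-M_1}}{(n-M_1)!}\prod_{j=1}^n\frac{[t(x_j-x_{j-1})]^{m_j}\,(n-j+1-M_{j+1})}{m_j!}=\prod_{i=1}^n(1+tx_i),$$ where $1/(n-M_1)!$ is interpreted as $0$ when $M_1>n$. *)

theory Defs
  imports Complex_Main "HOL-Library.FuncSet"
begin

definition inv_fact_int :: "int \<Rightarrow> 'a::field_char_0" where
  "inv_fact_int k = (if k < 0 then 0 else inverse (fact (nat k)))"

definition tailsum :: "nat \<Rightarrow> (nat \<Rightarrow> nat) \<Rightarrow> nat \<Rightarrow> nat" where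
  "tailsum n m j = (\<Sum>i\<in>{j..n}. m i)"

end

theory Submission
  imports Defs
begin

definition EE :: "'a::field_char_0 \<Rightarrow> int \<Rightarrow> 'a" where
  "EE y k = y ^ nat k * inv_fact_int k"

lemma EE_neg: "k < 0 \<Longrightarrow> EE y k = 0"
  by (simp add: EE_def inv_fact_int_def)

lemma EE_nat: "EE y (int N) = y ^ N / fact N"
  by (simp add: EE_def inv_fact_int_def divide_inverse)

lemma binsum:
  fixes y a :: "'a::field_char_0"
  assumes "N \<le> K"
  shows "(\<Sum>c\<le>K. EE y (int N - int c) * (a ^ c / fact c)) = (a + y) ^ N / fact N"
proof -
  have U: "{..K} = {..N} \<union> {N<..K}" using assms by auto
  have "(\<Sum>c\<le>K. EE y (int N - int c) * (a ^ c / fact c))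
      = (\<Sum>c\<le>N. EE y (int N - int c) * (a ^ c / fact c)) + (\<Sum>c\<in>{N<..K}. EE y (int N - int c) * (a ^ c / fact c))"
    unfolding U by (rule sum.union_disjoint) auto
  also have "(\<Sum>c\<in>{N<..K}. EE y (int N - int c) * (a ^ c / fact c)) = 0"
    by (intro sum.neutral) (auto simp: EE_neg)
  also have "(\<Sum>c\<le>N. EE y (int N - int c) * (a ^ c / fact c))
      = (\<Sum>c\<le>N. of_nat (N choose c) * a ^ c * y ^ (N - c) / fact N)"
  proof (intro sum.cong refl)
    fix c assume c: "c \<in> {..N}"
    hence "int N - int c = int (N - c)" by auto
    thus "EE y (int N - int c) * (a ^ c / fact c) = of_nat (N choose c) * a ^ c * y ^ (N - c) / fact N"
    proof -
      have cN: "c \<le> N" using c by simp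
      have f: "(fact N :: 'a) \<noteq> 0" "(fact c :: 'a) \<noteq> 0" "(fact (N-c) :: 'a) \<noteq> 0" by simp_all
      have "of_nat (N choose c) * a ^ c * y ^ (N - c) / fact N
          = (of_nat (N choose c) / fact N) * (a ^ c * y ^ (N - c))" by simp
      also have "of_nat (N choose c) / fact N = (1::'a) / (fact c * fact (N - c))"
        using f by (simp add: binomial_fact[OF cN])
      finally have r: "of_nat (N choose c) * a ^ c * y ^ (N - c) / fact N = 1 / (fact c * fact (N - c)) * (a ^ c * y ^ (N - c))" .
      have e: "EE y (int N - int c) = y ^ (N - c) / fact (N - c)"
        by (simp only: `int N - int c = int (N - c)` EE_nat)
      show ?thesis unfolding r e by (simp add: ac_simps)
    qed
  qed
  also have "\<dots> = (a + y) ^ N / fact N"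
    by (simp add: binomial_ring sum_divide_distrib)
  finally show ?thesis by simp
qed

lemma keysum:
  fixes y a :: "'a::field_char_0" and N :: int
  assumes "N \<le> int K"
  shows "(\<Sum>c\<le>K. EE y (N - int c) * (a ^ c / fact c)) * of_int N = (a + y) * EE (a + y) (N - 1)"
proof (cases "N \<le> 0")
  case True
  then show ?thesis by (cases "N = 0") (auto simp: EE_neg intro!: sum.neutral)
next
  case False
  define M where "M = nat N - 1"
  have M: "N = int (Suc M)" using False unfolding M_def by simp
  have nz: "(of_nat (Suc M) :: 'a) \<noteq> 0" by (rule of_nat_neq_0)
  have "(\<Sum>c\<le>K. EE y (N - int c) * (a ^ c / fact c)) = (a + y) ^ Suc M / fact (Suc M)"
    unfolding M by (rule binsum) (use assms M in simp)
  moreover have "N - 1 = int M" using M by simp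
  ultimately show ?thesis using M nz by (simp add: EE_nat)
qed

lemma gen:
  fixes y :: "'a::field_char_0" and a :: "nat \<Rightarrow> 'a"
  shows "l \<le> n+1 \<Longrightarrow> n+1-l \<le> K \<Longrightarrow> (\<Sum>m\<in>{l..n} \<rightarrow>\<^sub>E {..K}. EE y (int (n+1-l) - int (tailsum n m l)) *
     (\<Prod>j=l..n. a j ^ m j * of_int (int n - int j + 1 - int (tailsum n m (j+1))) / fact (m j)))
   = (\<Prod>i=l..n. y + (\<Sum>k=l..i. a k))"
proof (induction "n+1-l" arbitrary: l y)
  case 0
  then have l: "l = n+1" by simp
  show ?case by (simp add: l tailsum_def EE_def inv_fact_int_def)
next
  case (Suc d l y)
  hence ln: "l \<le> n" and d: "d = n+1-Suc l" and K: "n+1-l \<le> K" by auto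
  define F where "F m = (\<Prod>j=Suc l..n. a j ^ m j * of_int (int n - int j + 1 - int (tailsum n m (j+1))) / fact (m j))" for m
  let ?S = "{Suc l..n} \<rightarrow>\<^sub>E {..K}"
  have IH: "(\<Sum>g\<in>?S. EE z (int (n+1-Suc l) - int (tailsum n g (Suc l))) * F g) = (\<Prod>i=Suc l..n. z + (\<Sum>k=Suc l..i. a k))" for z
    using Suc.hyps(1)[of "Suc l" z] d ln K unfolding F_def by simp
  have dom: "{l..n} = insert l {Suc l..n}" using ln by auto
  have nl: "l \<notin> {Suc l..n}" by simp
  have ts1: "tailsum n (g(l:=c)) (Suc j) = tailsum n g (Suc j)" if "j \<ge> l" for g c j
    unfolding tailsum_def using that by (intro sum.cong) auto
  have ts2: "tailsum n (g(l:=c)) l = c + tailsum n g (Suc l)" for g c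
  proof -
    have "tailsum n (g(l:=c)) l = c + (\<Sum>i\<in>{Suc l..n}. (g(l:=c)) i)"
      unfolding tailsum_def dom by (simp add: sum.insert)
    also have "(\<Sum>i\<in>{Suc l..n}. (g(l:=c)) i) = tailsum n g (Suc l)"
      unfolding tailsum_def by (intro sum.cong) auto
    finally show ?thesis .
  qed
  define N where "N g = int (n+1-l) - int (tailsum n g (Suc l))" for g
  have prodsplit: "(\<Prod>j=l..n. a j ^ (g(l:=c)) j * of_int (int n - int j + 1 - int (tailsum n (g(l:=c)) (j+1))) / fact ((g(l:=c)) j))
      = a l ^ c * of_int (N g) / fact c * F g" for g c
  proof -
    have "(\<Prod>j=l..n. a j ^ (g(l:=c)) j * of_int (int n - int j + 1 - int (tailsum n (g(l:=c)) (j+1))) / fact ((g(l:=c)) j))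
       = a l ^ c * of_int (int n - int l + 1 - int (tailsum n (g(l:=c)) (l+1))) / fact c *
         (\<Prod>j=Suc l..n. a j ^ (g(l:=c)) j * of_int (int n - int j + 1 - int (tailsum n (g(l:=c)) (j+1))) / fact ((g(l:=c)) j))"
      unfolding dom by (simp add: prod.insert)
    also have "(\<Prod>j=Suc l..n. a j ^ (g(l:=c)) j * of_int (int n - int j + 1 - int (tailsum n (g(l:=c)) (j+1))) / fact ((g(l:=c)) j)) = F g"
      unfolding F_def by (intro prod.cong refl) (simp add: ts1)
    also have "int n - int l + 1 - int (tailsum n (g(l:=c)) (l+1)) = N g"
      using ts1[of l g c] ln by (simp add: N_def)
    finally show ?thesis .
  qed
  have PE: "{l..n} \<rightarrow>\<^sub>E {..K} = (\<lambda>(y, g). g(l := y)) ` ({..K} \<times> ?S)"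
    by (simp only: dom PiE_insert_eq)
  have pt: "EE y (int (n + 1 - l) - int (tailsum n (g(l := c)) l)) *
          (\<Prod>j = l..n. a j ^ (g(l := c)) j * of_int (int n - int j + 1 - int (tailsum n (g(l := c)) (j + 1))) / fact ((g(l := c)) j))
        = EE y (N g - int c) * (a l ^ c * of_int (N g) / fact c * F g)" for c g
  proof -
    have e: "int (n+1-l) - int (c + tailsum n g (Suc l)) = N g - int c" by (simp add: N_def)
    show ?thesis unfolding prodsplit ts2 e ..
  qed
  have "(\<Sum>m\<in>{l..n} \<rightarrow>\<^sub>E {..K}. EE y (int (n+1-l) - int (tailsum n m l)) *
     (\<Prod>j=l..n. a j ^ m j * of_int (int n - int j + 1 - int (tailsum n m (j+1))) / fact (m j)))
    = (\<Sum>(c,g)\<in>{..K} \<times> ?S. EE y (N g - int c) * (a l ^ c * of_int (N g) / fact c * F g))"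
    unfolding PE
    by (subst sum.reindex[OF inj_combinator[OF nl]], rule sum.cong[OF refl], simp only: comp_def split_paired_all case_prod_conv pt)
  also have "\<dots> = (\<Sum>c\<le>K. \<Sum>g\<in>?S. EE y (N g - int c) * (a l ^ c * of_int (N g) / fact c * F g))"
    by (rule sum.cartesian_product[symmetric])
  also have "\<dots> = (\<Sum>g\<in>?S. \<Sum>c\<le>K. EE y (N g - int c) * (a l ^ c * of_int (N g) / fact c * F g))"
    by (rule sum.swap)
  also have "\<dots> = (\<Sum>g\<in>?S. ((\<Sum>c\<le>K. EE y (N g - int c) * (a l ^ c / fact c)) * of_int (N g)) * F g)"
    by (intro sum.cong refl, simp only: sum_distrib_right, intro sum.cong refl) (simp add: mult_ac)
  also have "\<dots> = (\<Sum>g\<in>?S. (a l + y) * (EE (a l + y) (int (n+1-Suc l) - int (tailsum n g (Suc l))) * F g))"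
  proof (intro sum.cong refl)
    fix g
    have "0 \<le> int (tailsum n g (Suc l))" by simp
    hence "N g \<le> int K" using K ln unfolding N_def by (simp add: of_nat_diff)
    moreover have "N g - 1 = int (n+1-Suc l) - int (tailsum n g (Suc l))" using ln by (simp add: N_def)
    ultimately show "((\<Sum>c\<le>K. EE y (N g - int c) * (a l ^ c / fact c)) * of_int (N g)) * F g
       = (a l + y) * (EE (a l + y) (int (n+1-Suc l) - int (tailsum n g (Suc l))) * F g)"
      using keysum[of "N g" K y "a l"] by simp
  qed
  also have "\<dots> = (a l + y) * (\<Prod>i=Suc l..n. (a l + y) + (\<Sum>k=Suc l..i. a k))"
    by (simp only: sum_distrib_left[symmetric] IH)
  also have "\<dots> = (\<Prod>i=l..n. y + (\<Sum>k=l..i. a k))"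
  proof -
    have "(\<Prod>i=l..n. y + (\<Sum>k=l..i. a k)) = (y + a l) * (\<Prod>i=Suc l..n. y + (\<Sum>k=l..i. a k))"
      unfolding dom by (simp add: prod.insert)
    also have "(\<Prod>i=Suc l..n. y + (\<Sum>k=l..i. a k)) = (\<Prod>i=Suc l..n. (a l + y) + (\<Sum>k=Suc l..i. a k))"
      by (intro prod.cong refl) (simp add: sum.atLeast_Suc_atMost)
    finally show ?thesis by (simp add: add.commute)
  qed
  finally show ?case .
qed

lemma tel:
  fixes t :: "'a::field_char_0" and x :: "nat \<Rightarrow> 'a"
  shows "(\<Sum>k=1..i. t * (x k - x (k - 1))) = t * x i - t * x 0"
  by (induction i) (auto simp: algebra_simps)

theorem mainTheorem12:
  fixes n :: nat and t :: "'a::field_char_0" and x :: "nat \<Rightarrow> 'a"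
  shows "(\<Sum>m\<in>({1..n} \<rightarrow>\<^sub>E {..n}).
            (1 + t * x 0) ^ (n - tailsum n m 1) * inv_fact_int (int n - int (tailsum n m 1)) *
            (\<Prod>j=1..n. (t * (x j - x (j - 1))) ^ (m j)
                 * of_int (int n - int j + 1 - int (tailsum n m (j + 1))) / fact (m j)))
         = (\<Prod>i=1..n. 1 + t * x i)"
proof -
  have G: "(\<Sum>m\<in>{1..n} \<rightarrow>\<^sub>E {..n}. EE (1 + t * x 0) (int (n+1-1) - int (tailsum n m 1)) *
     (\<Prod>j=1..n. (t * (x j - x (j - 1))) ^ m j * of_int (int n - int j + 1 - int (tailsum n m (j+1))) / fact (m j)))
   = (\<Prod>i=1..n. (1 + t * x 0) + (\<Sum>k=1..i. t * (x k - x (k - 1))))"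
    by (rule gen) simp_all
  have L: "EE (1 + t * x 0) (int (n+1-1) - int (tailsum n m 1)) = (1 + t * x 0) ^ (n - tailsum n m 1) * inv_fact_int (int n - int (tailsum n m 1))" for m
  proof -
    have "nat (int n - int (tailsum n m 1)) = n - tailsum n m 1" by arith
    then show ?thesis by (simp add: EE_def)
  qed
  have R: "(\<Prod>i=1..n. (1 + t * x 0) + (\<Sum>k=1..i. t * (x k - x (k - 1)))) = (\<Prod>i=1..n. 1 + t * x i)"
    by (intro prod.cong refl) (simp only: tel, simp)
  show ?thesis using G unfolding L R .
qed

end
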